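(* Let $X$ and $Y$ be Hausdorff compact spaces, $\pi: X \to Y$ a fully closed continuous surjection, $y \in Y$, and $f$ a real-valued continuous function on $\pi^{-1}(y)$. Then there exists a continuous function $\tilde f: X \to \mathbb{R}$ extending $f$ such that the oscillation of $\tilde f$ on $\pi^{-1}(y')$ is $0$ (i.e. $\tilde f$ is constant on $\pi^{-1}(y')$) for every $y' \in Y$ with $y' \neq y$.
   Context: A continuous surjection $\pi: X \to Y$ between Hausdorff compacta is fully closed if for any two closed disjoint subsets $F_1, F_2 \subset X$ the set $\pi(F_1)\cap\pi(F_2)$ is finite. *)

theory Defs
  imports "HOL-Analysis.Analysis"
begin

definition fully_closed :: "'a topology \<Rightarrow> 'b topology \<Rightarrow> ('a \<Rightarrow> 'b) \<Rightarrow> bool" where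
  "fully_closed X Y \<pi> \<longleftrightarrow>
     continuous_map X Y \<pi> \<and> \<pi> ` topspace X = topspace Y \<and>
     (\<forall>F1 F2. closedin X F1 \<longrightarrow> closedin X F2 \<longrightarrow> F1 \<inter> F2 = {} \<longrightarrow>
        finite (\<pi> ` F1 \<inter> \<pi> ` F2))"

end

theory Submission
  imports Defs
begin

theorem lemma4p2:
  fixes X :: "'a topology" and Y :: "'b topology" and \<pi> :: "'a \<Rightarrow> 'b"
    and y :: 'b and f :: "'a \<Rightarrow> real"
  assumes "compact_space X" and "Hausdorff_space X"
    and "compact_space Y" and "Hausdorff_space Y"
    and "fully_closed X Y \<pi>"
    and "y \<in> topspace Y"
    and "continuous_map (subtopology X {x \<in> topspace X. \<pi> x = y}) euclideanreal f"
  shows "\<exists>g. continuous_map X euclideanreal g \<and>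
             (\<forall>x \<in> topspace X. \<pi> x = y \<longrightarrow> g x = f x) \<and>
             (\<forall>y' \<in> topspace Y. y' \<noteq> y \<longrightarrow>
                (\<forall>x1 \<in> topspace X. \<forall>x2 \<in> topspace X.
                   \<pi> x1 = y' \<longrightarrow> \<pi> x2 = y' \<longrightarrow> g x1 = g x2))"
proof -
  have cpi: "continuous_map X Y \<pi>" and surj: "\<pi> ` topspace X = topspace Y"
    and fc: "\<And>F1 F2. closedin X F1 \<Longrightarrow> closedin X F2 \<Longrightarrow> F1 \<inter> F2 = {} \<Longrightarrow> finite (\<pi> ` F1 \<inter> \<pi> ` F2)"
    using assms(5) unfolding fully_closed_def by blast+
  define r where "r = (\<lambda>b. SOME x. x \<in> topspace X \<and> \<pi> x = b)"
  have r: "r b \<in> topspace X \<and> \<pi> (r b) = b" if "b \<in> topspace Y" for b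
  proof -
    have "\<exists>x. x \<in> topspace X \<and> \<pi> x = b" using that surj by (metis imageE)
    then show ?thesis unfolding r_def by (rule someI_ex)
  qed
  define q where "q = (\<lambda>x. if \<pi> x = y then x else r (\<pi> x))"
  have piX: "\<pi> x \<in> topspace Y" if "x \<in> topspace X" for x
    using cpi that by (auto simp: continuous_map_def)
  have qX: "q x \<in> topspace X" if "x \<in> topspace X" for x
  proof (cases "\<pi> x = y")
    case True then show ?thesis using that unfolding q_def by simp
  next
    case False then show ?thesis using r[OF piX[OF that]] unfolding q_def by simp
  qed
  have qeq: "q x1 = q x2 \<longleftrightarrow> \<pi> x1 = \<pi> x2 \<and> (\<pi> x1 = y \<longrightarrow> x1 = x2)"
    if "x1 \<in> topspace X" "x2 \<in> topspace X" for x1 x2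
  proof -
    have r1: "\<pi> (r (\<pi> x1)) = \<pi> x1" and r2: "\<pi> (r (\<pi> x2)) = \<pi> x2"
      using r[OF piX[OF that(1)]] r[OF piX[OF that(2)]] by blast+
    show ?thesis
    proof (cases "\<pi> x1 = y"; cases "\<pi> x2 = y")
    qed (simp_all add: q_def; metis r1 r2)+
  qed
  define P where "P = (\<lambda>U. U \<subseteq> q ` topspace X \<and> openin X {x \<in> topspace X. q x \<in> U})"
  have istop: "istopology P"
    unfolding istopology_def P_def
  proof (intro conjI allI impI)
    fix S T assume "S \<subseteq> q ` topspace X \<and> openin X {x \<in> topspace X. q x \<in> S}"
      "T \<subseteq> q ` topspace X \<and> openin X {x \<in> topspace X. q x \<in> T}"
    then show "S \<inter> T \<subseteq> q ` topspace X" "openin X {x \<in> topspace X. q x \<in> S \<inter> T}"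
      using openin_Int[of X "{x \<in> topspace X. q x \<in> S}" "{x \<in> topspace X. q x \<in> T}"]
      by (auto simp: Collect_conj_eq[symmetric] conj_ac)
  next
    fix K assume "\<forall>S\<in>K. S \<subseteq> q ` topspace X \<and> openin X {x \<in> topspace X. q x \<in> S}"
    moreover have "{x \<in> topspace X. q x \<in> \<Union> K} = (\<Union>S\<in>K. {x \<in> topspace X. q x \<in> S})" by auto
    ultimately show "\<Union> K \<subseteq> q ` topspace X" "openin X {x \<in> topspace X. q x \<in> \<Union> K}"
      by auto
  qed
  define Z where "Z = topology P"
  have openZ: "openin Z U \<longleftrightarrow> U \<subseteq> q ` topspace X \<and> openin X {x \<in> topspace X. q x \<in> U}" for U
    unfolding Z_def using istop by (simp add: P_def)
  have topZ: "topspace Z = q ` topspace X"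
  proof -
    have "{x \<in> topspace X. q x \<in> q ` topspace X} = topspace X" by auto
    then have "openin Z (q ` topspace X)" unfolding openZ by simp
    then show ?thesis using openin_subset[of Z] unfolding openZ topspace_def by blast
  qed
  have closedZ: "closedin Z K \<longleftrightarrow> K \<subseteq> q ` topspace X \<and> closedin X {x \<in> topspace X. q x \<in> K}" for K
  proof -
    have "{x \<in> topspace X. q x \<in> q ` topspace X - K} = topspace X - {x \<in> topspace X. q x \<in> K}"
      by auto
    then show ?thesis unfolding closedin_def openZ topZ by auto
  qed
  have contq: "continuous_map X Z q"
    unfolding continuous_map_def openZ topZ
    by (auto simp: qX)
  have satclosed: "closedin X {x \<in> topspace X. q x \<in> q ` C}" if C: "closedin X C" for C
  proof -
    have CX: "C \<subseteq> topspace X" using closedin_subset C by blast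
    define S where "S = {x \<in> topspace X. q x \<in> q ` C}"
    have "openin X (topspace X - S)"
    proof (subst openin_subopen, intro ballI)
      fix x assume x: "x \<in> topspace X - S"
      show "\<exists>T. openin X T \<and> x \<in> T \<and> T \<subseteq> topspace X - S"
      proof (cases "\<pi> x = y")
        case False
        have nx: "\<pi> x \<notin> \<pi> ` C"
        proof
          assume "\<pi> x \<in> \<pi> ` C"
          then obtain c where c: "c \<in> C" "\<pi> x = \<pi> c" by blast
          then have "q x = q c" using qeq[of x c] x CX False by blast
          then show False using x c unfolding S_def by blast
        qed
        have "closedin Y (\<pi> ` C)"
          using continuous_imp_closed_map[OF cpi assms(1) assms(4)] C unfolding closed_map_def by blast
        then have oT: "openin X {z \<in> topspace X. \<pi> z \<in> topspace Y - \<pi> ` C}"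
          by (intro openin_continuous_map_preimage[OF cpi]) blast
        have sub: "{z \<in> topspace X. \<pi> z \<in> topspace Y - \<pi> ` C} \<subseteq> topspace X - S"
        proof
          fix z assume z: "z \<in> {z \<in> topspace X. \<pi> z \<in> topspace Y - \<pi> ` C}"
          show "z \<in> topspace X - S"
          proof
            show "z \<in> topspace X" using z by blast
            show "z \<notin> S"
            proof
              assume "z \<in> S"
              then obtain c where c: "c \<in> C" "q z = q c" unfolding S_def by blast
              then have "\<pi> z = \<pi> c" using qeq[of z c] z CX by blast
              then show False using z c by blast
            qed
          qed
        qed
        have "x \<in> {z \<in> topspace X. \<pi> z \<in> topspace Y - \<pi> ` C}"
          using x nx piX by blast
        then show ?thesis using oT sub by blast
      next
        case True
        have xC: "x \<notin> C"
        proof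
          assume "x \<in> C" then show False using x unfolding S_def by blast
        qed
        have "regular_space X" by (rule compact_Hausdorff_imp_regular_space[OF assms(1,2)])
        then have R: "\<forall>C a. closedin X C \<and> a \<in> topspace X - C
              \<longrightarrow> (\<exists>U. openin X U \<and> a \<in> U \<and> disjnt C (X closure_of U))"
          unfolding regular_space .
        have CxX: "closedin X C \<and> x \<in> topspace X - C" using C x xC by blast
        obtain U where U: "openin X U" "x \<in> U" "disjnt C (X closure_of U)"
          using R[rule_format, OF CxX] by (elim exE conjE)
        define K where "K = X closure_of U"
        have UK: "U \<subseteq> K" unfolding K_def using closure_of_subset[OF openin_subset[OF U(1)]] .
        have Kc: "closedin X K" unfolding K_def by simp
        have KC: "K \<inter> C = {}" using U(3) unfolding K_def disjnt_def by blast
        have fin: "finite (\<pi> ` K \<inter> \<pi> ` C)" using fc[OF Kc C KC] .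
        define Q where "Q = \<pi> ` K \<inter> \<pi> ` C - {y}"
        have "finite Q" unfolding Q_def using fin by simp
        moreover have "Q \<subseteq> topspace Y"
        proof
          fix b assume "b \<in> Q"
          then obtain c where "c \<in> C" "b = \<pi> c" unfolding Q_def by blast
          then show "b \<in> topspace Y" using CX piX by blast
        qed
        ultimately have "closedin Y Q"
          using Hausdorff_imp_t1_space[OF assms(4)] unfolding t1_space_closedin_finite by simp
        then have cQ: "closedin X {z \<in> topspace X. \<pi> z \<in> Q}"
          by (rule closedin_continuous_map_preimage[OF cpi])
        define T where "T = U - {z \<in> topspace X. \<pi> z \<in> Q}"
        have oT: "openin X T" unfolding T_def using openin_diff[OF U(1) cQ] .
        have xT: "x \<in> T" unfolding T_def Q_def using U(2) True by blast
        have "T \<subseteq> topspace X - S"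
        proof
          fix z assume z: "z \<in> T"
          have zX: "z \<in> topspace X" using z openin_subset[OF U(1)] unfolding T_def by blast
          show "z \<in> topspace X - S"
          proof
            show "z \<in> topspace X" by (rule zX)
            show "z \<notin> S"
            proof
              assume "z \<in> S"
              then obtain c where c: "c \<in> C" "q z = q c" unfolding S_def by blast
              then have e: "\<pi> z = \<pi> c" "\<pi> z = y \<longrightarrow> z = c" using qeq[of z c] zX CX by blast+
              have zK: "z \<in> K" using z UK unfolding T_def by blast
              show False
              proof (cases "\<pi> z = y")
                case True
                then show False using e c zK KC by blast
              next
                case False
                then have "\<pi> z \<in> Q" unfolding Q_def using zK c e by blast
                then show False using z zX unfolding T_def by blast
              qed
            qed
          qed
        qed
        then show ?thesis using oT xT by blast
      qed
    qed
    moreover have "S \<subseteq> topspace X" unfolding S_def by blast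
    ultimately show ?thesis unfolding closedin_def S_def by blast
  qed
  have cmap: "closed_map X Z q"
    unfolding closed_map_def
  proof (intro allI impI)
    fix C assume C: "closedin X C"
    then have "C \<subseteq> topspace X" using closedin_subset by blast
    then show "closedin Z (q ` C)" unfolding closedZ using satclosed[OF C] by blast
  qed
  have nX: "normal_space X"
    using compact_Hausdorff_or_regular_imp_normal_space assms(1,2) by blast
  have nZ: "normal_space Z"
    using normal_space_continuous_closed_map_image[OF nX contq cmap] topZ by blast
  define F where "F = {x \<in> topspace X. \<pi> x = y}"
  have qF: "q x = x" if "x \<in> F" for x using that unfolding F_def q_def by simp
  have imF: "q ` A = A" if "A \<subseteq> F" for A
  proof -
    have "q ` A = id ` A" using qF that by (intro image_cong) auto
    then show ?thesis by simp
  qed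
  have cF: "closedin X F" unfolding F_def
    using closedin_continuous_map_preimage[OF cpi closedin_t1_singleton[OF Hausdorff_imp_t1_space[OF assms(4)] assms(6)]]
    by simp
  have cFZ: "closedin Z F" using cmap cF imF[of F] unfolding closed_map_def by auto
  have FZ: "F \<subseteq> topspace Z" using closedin_subset[OF cFZ] .
  have contfZ: "continuous_map (subtopology Z F) euclideanreal f"
    unfolding continuous_map_closedin
  proof (intro conjI allI impI)
    show "f \<in> topspace (subtopology Z F) \<rightarrow> topspace euclideanreal" by simp
  next
    fix C :: "real set" assume C: "closedin euclideanreal C"
    have tF: "topspace (subtopology X F) = F" using closedin_subset[OF cF] by auto
    have "closedin (subtopology X F) {x \<in> topspace (subtopology X F). f x \<in> C}"
      using closedin_continuous_map_preimage[OF assms(7)[folded F_def] C] .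
    then have "closedin (subtopology X F) {x \<in> F. f x \<in> C}" unfolding tF .
    then have A: "closedin X {x \<in> F. f x \<in> C}"
      using closedin_closed_subtopology[OF cF] by blast
    have "closedin Z {x \<in> F. f x \<in> C}"
      using cmap A imF[of "{x \<in> F. f x \<in> C}"] unfolding closed_map_def by auto
    moreover have "topspace (subtopology Z F) = F" using FZ by auto
    ultimately show "closedin (subtopology Z F) {x \<in> topspace (subtopology Z F). f x \<in> C}"
      using closedin_closed_subtopology[OF cFZ] by simp
  qed
  obtain g' where g': "continuous_map Z euclideanreal g'" "\<And>x. x \<in> F \<Longrightarrow> g' x = f x"
    using Tietze_extension_realinterval[OF nZ cFZ _ _ contfZ, of UNIV] by auto
  show ?thesis
  proof (intro exI conjI ballI impI)
    show "continuous_map X euclideanreal (g' \<circ> q)"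
      using continuous_map_compose[OF contq g'(1)] .
  next
    fix x assume "x \<in> topspace X" "\<pi> x = y"
    then have "x \<in> F" unfolding F_def by blast
    then show "(g' \<circ> q) x = f x" using qF g'(2) by simp
  next
    fix y' x1 x2 assume h: "y' \<in> topspace Y" "y' \<noteq> y" "x1 \<in> topspace X" "x2 \<in> topspace X"
      "\<pi> x1 = y'" "\<pi> x2 = y'"
    have "q x1 = q x2" unfolding qeq[OF h(3) h(4)] using h(2,5,6) by simp
    then show "(g' \<circ> q) x1 = (g' \<circ> q) x2" by simp
  qed
qed

end
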